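(* Let $W$ be an irreducible finite reflection group, $R:W\to\mathrm{GL}(V_R)$ a reflection representation and $\eta\in\mathrm{Hom}(W,\{\pm1\})$. Then the restriction $(R\otimes\eta)_{\mathcal H'}:\mathcal H'\to\mathfrak{sl}(V_R)$ is surjective.
   Context: $W\subset\mathrm{GL}(V)$ is an irreducible finite group generated by reflections (elements of order 2 of $\mathrm{GL}(V)$ fixing a hyperplane, $V$ a finite-dimensional complex vector space), $\mathcal R$ its set of reflections. $\mathcal H$ is the Lie subalgebra of $\mathbb CW$ (bracket $xy-yx$) generated by $\mathcal R$, $\mathcal H'$ its derived algebra. A reflection representation is an irreducible $R:W\to\mathrm{GL}(V_R)$ with $\dim V_R\ge2$ such that for every $s\in\mathcal R$, $R(s)$ is either $\mathrm{Id}$ or a reflection of $V_R$. *)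

theory Defs
  imports "HOL-Analysis.Analysis"
begin

type_synonym ('n) cmat = "complex^('n::finite)^'n"

definition csubspace :: "(complex^'n) set \<Rightarrow> bool" where
  "csubspace U \<longleftrightarrow> 0 \<in> U \<and> (\<forall>u\<in>U. \<forall>v\<in>U. u + v \<in> U) \<and> (\<forall>c. \<forall>u\<in>U. c *s u \<in> U)"

definition chyperplane :: "(complex^'n) set \<Rightarrow> bool" where
  "chyperplane H \<longleftrightarrow> (\<exists>a::complex^'n. a \<noteq> 0 \<and> H = {v. (\<Sum>i\<in>UNIV. a $ i * v $ i) = 0})"

definition is_reflection :: "('n::finite) cmat \<Rightarrow> bool" where
  "is_reflection s \<longleftrightarrow> s ** s = mat 1 \<and> s \<noteq> mat 1 \<and>
     (\<exists>H. chyperplane H \<and> (\<forall>v\<in>H. s *v v = v))"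

definition reflections :: "('n::finite) cmat set \<Rightarrow> ('n::finite) cmat set" where
  "reflections W = {s \<in> W. is_reflection s}"

text \<open>Group generated by a set of involutions (products of generators).\<close>
inductive_set gen_by :: "('n::finite) cmat set \<Rightarrow> ('n::finite) cmat set" for S where
  gen_one: "mat 1 \<in> gen_by S"
| gen_mult: "s \<in> S \<Longrightarrow> x \<in> gen_by S \<Longrightarrow> s ** x \<in> gen_by S"

definition matrix_group :: "('n::finite) cmat set \<Rightarrow> bool" where
  "matrix_group W \<longleftrightarrow> mat 1 \<in> W \<and> (\<forall>u\<in>W. \<forall>v\<in>W. u ** v \<in> W) \<and>
     (\<forall>u\<in>W. \<exists>v\<in>W. u ** v = mat 1 \<and> v ** u = mat 1)"

definition irreducible_on :: "('n::finite) cmat set \<Rightarrow> bool" where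
  "irreducible_on G \<longleftrightarrow> (\<forall>U. csubspace U \<and> (\<forall>g\<in>G. \<forall>u\<in>U. g *v u \<in> U) \<longrightarrow> U = {0} \<or> U = UNIV)"

definition irreducible_reflection_group :: "('n::finite) cmat set \<Rightarrow> bool" where
  "irreducible_reflection_group W \<longleftrightarrow> finite W \<and> matrix_group W \<and>
     W = gen_by (reflections W) \<and> irreducible_on W"

definition representation :: "('n::finite) cmat set \<Rightarrow> (('n::finite) cmat \<Rightarrow> ('m::finite) cmat) \<Rightarrow> bool" where
  "representation W R \<longleftrightarrow> (\<forall>w\<in>W. invertible (R w)) \<and> (\<forall>u\<in>W. \<forall>v\<in>W. R (u ** v) = R u ** R v)"

definition reflection_representation :: "('n::finite) cmat set \<Rightarrow> (('n::finite) cmat \<Rightarrow> ('m::finite) cmat) \<Rightarrow> bool" where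
  "reflection_representation W R \<longleftrightarrow> representation W R \<and> irreducible_on (R ` W) \<and>
     CARD('m) \<ge> 2 \<and> (\<forall>s\<in>reflections W. R s = mat 1 \<or> is_reflection (R s))"

definition sign_char :: "('n::finite) cmat set \<Rightarrow> (('n::finite) cmat \<Rightarrow> complex) \<Rightarrow> bool" where
  "sign_char W \<eta> \<longleftrightarrow> (\<forall>w\<in>W. \<eta> w = 1 \<or> \<eta> w = -1) \<and> (\<forall>u\<in>W. \<forall>v\<in>W. \<eta> (u ** v) = \<eta> u * \<eta> v)"

text \<open>Group algebra CW: functions W \<rightarrow> complex (supported on W), convolution product.\<close>
definition galg :: "('n::finite) cmat set \<Rightarrow> (('n::finite) cmat \<Rightarrow> complex) set" where
  "galg W = {f. \<forall>w. w \<notin> W \<longrightarrow> f w = 0}"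

definition gmult :: "('n::finite) cmat set \<Rightarrow> (('n::finite) cmat \<Rightarrow> complex) \<Rightarrow> (('n::finite) cmat \<Rightarrow> complex) \<Rightarrow> (('n::finite) cmat \<Rightarrow> complex)" where
  "gmult W f g = (\<lambda>w. if w \<in> W then (\<Sum>u\<in>W. \<Sum>v\<in>W. if u ** v = w then f u * g v else 0) else 0)"

definition gbracket :: "('n::finite) cmat set \<Rightarrow> (('n::finite) cmat \<Rightarrow> complex) \<Rightarrow> (('n::finite) cmat \<Rightarrow> complex) \<Rightarrow> (('n::finite) cmat \<Rightarrow> complex)" where
  "gbracket W f g = (\<lambda>w. gmult W f g w - gmult W g f w)"

definition delta :: "('n::finite) cmat \<Rightarrow> (('n::finite) cmat \<Rightarrow> complex)" where
  "delta s = (\<lambda>w. if w = s then 1 else 0)"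

inductive_set lie_H :: "('n::finite) cmat set \<Rightarrow> (('n::finite) cmat \<Rightarrow> complex) set" for W where
  H_gen: "s \<in> reflections W \<Longrightarrow> delta s \<in> lie_H W"
| H_zero: "(\<lambda>w. 0) \<in> lie_H W"
| H_add: "x \<in> lie_H W \<Longrightarrow> y \<in> lie_H W \<Longrightarrow> (\<lambda>w. x w + y w) \<in> lie_H W"
| H_smult: "x \<in> lie_H W \<Longrightarrow> (\<lambda>w. c * x w) \<in> lie_H W"
| H_bracket: "x \<in> lie_H W \<Longrightarrow> y \<in> lie_H W \<Longrightarrow> gbracket W x y \<in> lie_H W"

inductive_set lie_H' :: "('n::finite) cmat set \<Rightarrow> (('n::finite) cmat \<Rightarrow> complex) set" for W where
  H'_bracket: "x \<in> lie_H W \<Longrightarrow> y \<in> lie_H W \<Longrightarrow> gbracket W x y \<in> lie_H' W"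
| H'_zero: "(\<lambda>w. 0) \<in> lie_H' W"
| H'_add: "x \<in> lie_H' W \<Longrightarrow> y \<in> lie_H' W \<Longrightarrow> (\<lambda>w. x w + y w) \<in> lie_H' W"
| H'_smult: "x \<in> lie_H' W \<Longrightarrow> (\<lambda>w. c * x w) \<in> lie_H' W"

text \<open>Linear extension to CW of the representation R \<otimes> \<eta>, w \<mapsto> \<eta>(w) R(w).\<close>
definition tensor_ext :: "('n::finite) cmat set \<Rightarrow> (('n::finite) cmat \<Rightarrow> ('m::finite) cmat) \<Rightarrow> (('n::finite) cmat \<Rightarrow> complex)
    \<Rightarrow> (('n::finite) cmat \<Rightarrow> complex) \<Rightarrow> ('m::finite) cmat" where
  "tensor_ext W R \<eta> f = (\<Sum>w\<in>W. (\<chi> i j. f w * \<eta> w * R w $ i $ j))"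

definition sl :: "('m::finite) cmat set" where
  "sl = {A. trace A = 0}"

end

theory Submission
  imports Defs
begin

definition dotv :: "complex^'m \<Rightarrow> complex^'m \<Rightarrow> complex" where
  "dotv a x = (\<Sum>i\<in>UNIV. a$i * x$i)"
definition outer :: "complex^'m \<Rightarrow> complex^'m \<Rightarrow> complex^'m^'m" where
  "outer v a = (\<chi> i j. v$i * a$j)"
definition cs :: "complex \<Rightarrow> complex^'m^'m \<Rightarrow> complex^'m^'m" where
  "cs c A = (\<chi> i j. c * A$i$j)"
definition br :: "complex^'m^'m \<Rightarrow> complex^'m^'m \<Rightarrow> complex^'m^'m" where
  "br A B = A ** B - B ** A"

lemma cs_ent[simp]: "cs c A $ i $ j = c * A$i$j" by (simp add: cs_def)
lemma outer_ent[simp]: "outer v a $ i $ j = v$i * a$j" by (simp add: outer_def)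

lemma mm_ent: "(A ** B) $ i $ j = (\<Sum>k\<in>UNIV. A$i$k * B$k$j)"
  by (simp add: matrix_matrix_mult_def)

lemma outer_mult: "outer u a ** outer v b = cs (dotv a v) (outer u b)"
  by (simp add: vec_eq_iff mm_ent dotv_def sum_distrib_left sum_distrib_right algebra_simps)

lemma trace_outer: "trace (outer v a) = dotv a v"
  by (simp add: trace_def dotv_def mult.commute)

lemma trace_cs: "trace (cs c A) = c * trace A"
  by (simp add: trace_def sum_distrib_left)

lemma cs_cs[simp]: "cs a (cs b A) = cs (a*b) A"
  by (simp add: vec_eq_iff)

lemma cs_1[simp]: "cs 1 A = A" by (simp add: vec_eq_iff)
lemma cs_0[simp]: "cs 0 A = 0" by (simp add: vec_eq_iff)
lemma cs_zero[simp]: "cs c 0 = 0" by (simp add: vec_eq_iff)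

lemma cs_mult_left: "cs c A ** B = cs c (A ** B)"
  by (simp add: vec_eq_iff mm_ent sum_distrib_left algebra_simps)
lemma cs_mult_right: "A ** cs c B = cs c (A ** B)"
  by (simp add: vec_eq_iff mm_ent sum_distrib_left algebra_simps)

lemma cs_add: "cs c (A + B) = cs c A + cs c B"
  by (simp add: vec_eq_iff algebra_simps)
lemma cs_diff: "cs c (A - B) = cs c A - cs c B"
  by (simp add: vec_eq_iff algebra_simps)
lemma cs_minus: "cs c (- A) = cs (-c) A"
  by (simp add: vec_eq_iff algebra_simps)

lemma outer_mv: "outer v a *v x = dotv a x *s v"
  by (simp add: vec_eq_iff matrix_vector_mult_def dotv_def sum_distrib_left algebra_simps)

lemma outer_left: "outer v a ** M = outer v (a v* M)"
  by (simp add: vec_eq_iff mm_ent vector_matrix_mult_def sum_distrib_left algebra_simps)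

lemma outer_right: "M ** outer v a = outer (M *v v) a"
  by (simp add: vec_eq_iff mm_ent matrix_vector_mult_def sum_distrib_right mult.assoc)

lemma dotv_vm: "dotv (a v* M) x = dotv a (M *v x)"
proof -
  have "dotv (a v* M) x = (\<Sum>j\<in>UNIV. \<Sum>i\<in>UNIV. a$i * M$i$j * x$j)"
    by (simp add: dotv_def vector_matrix_mult_def sum_distrib_right)
  also have "\<dots> = (\<Sum>i\<in>UNIV. \<Sum>j\<in>UNIV. a$i * M$i$j * x$j)" by (rule sum.swap)
  also have "\<dots> = dotv a (M *v x)"
    by (simp add: dotv_def matrix_vector_mult_def sum_distrib_left mult.assoc)
  finally show ?thesis .
qed

lemma outer_diff2: "outer v (a - b) = outer v a - outer v b"
  by (simp add: vec_eq_iff algebra_simps)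
lemma outer_diff1: "outer (v - w) a = outer v a - outer w a"
  by (simp add: vec_eq_iff algebra_simps)
lemma outer_smult2: "outer v (c *s a) = cs c (outer v a)"
  by (simp add: vec_eq_iff algebra_simps)
lemma outer_smult1: "outer (c *s v) a = cs c (outer v a)"
  by (simp add: vec_eq_iff algebra_simps)
lemma outer_zero2[simp]: "outer v 0 = 0" by (simp add: vec_eq_iff)
lemma outer_zero1[simp]: "outer 0 a = 0" by (simp add: vec_eq_iff)

lemma dotv_diff: "dotv a (x - y) = dotv a x - dotv a y"
  by (simp add: dotv_def algebra_simps sum_subtractf)
lemma dotv_add: "dotv a (x + y) = dotv a x + dotv a y"
  by (simp add: dotv_def algebra_simps sum.distrib)
lemma dotv_smult: "dotv a (c *s x) = c * dotv a x"
  by (simp add: dotv_def algebra_simps sum_distrib_left)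
lemma dotv_smult1: "dotv (c *s a) x = c * dotv a x"
  by (simp add: dotv_def algebra_simps sum_distrib_left)
lemma dotv_zero[simp]: "dotv a 0 = 0" by (simp add: dotv_def)
lemma dotv_diff1: "dotv (a - b) x = dotv a x - dotv b x"
  by (simp add: dotv_def algebra_simps sum_subtractf)

lemma dotv_axis: "dotv a (axis k 1) = a$k"
proof -
  have eq: "(\<lambda>i. a$i * axis k 1 $ i) = (\<lambda>i. if i = k then a$i else 0)" by (auto simp: axis_def)
  show ?thesis unfolding dotv_def by (subst eq) simp
qed

lemma dotv_all_zero: "(\<forall>x. dotv a x = 0) \<Longrightarrow> a = 0"
  by (metis dotv_axis vec_eq_iff zero_index)

lemma outer_cs_eq0: assumes "cs c (outer v a) = 0" "outer v a \<noteq> 0" shows "c = 0"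
proof -
  from assms(2) obtain i j where "outer v a $ i $ j \<noteq> 0" by (metis vec_eq_iff zero_index)
  moreover have "c * outer v a $ i $ j = 0" using assms(1) by (metis cs_ent zero_index)
  ultimately show ?thesis by simp
qed

lemma trace_diff: "trace (A - B) = trace A - trace (B::complex^'m^'m)" by (rule trace_sub)



lemma mm_diff_l: "(A::complex^'m^'m) ** (B - C) = A ** B - A ** C"
  by (simp add: vec_eq_iff mm_ent algebra_simps sum_subtractf)
lemma mm_diff_r: "((A::complex^'m^'m) - B) ** C = A ** C - B ** C"
  by (simp add: vec_eq_iff mm_ent algebra_simps sum_subtractf)
lemma mm_add_r: "((A::complex^'m^'m) + B) ** C = A ** C + B ** C"
  by (simp add: vec_eq_iff mm_ent algebra_simps sum.distrib)
lemma mv_smult: "(Y::complex^'m^'m) *v (c *s u) = c *s (Y *v u)"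
  by (simp add: vec_eq_iff matrix_vector_mult_def sum_distrib_left algebra_simps)
lemma mv_diff: "(Y::complex^'m^'m) *v (u - w) = Y *v u - Y *v w"
  by (simp add: vec_eq_iff matrix_vector_mult_def sum_subtractf algebra_simps)
lemma mv_add: "(Y::complex^'m^'m) *v (u + w) = Y *v u + Y *v w"
  by (simp add: vec_eq_iff matrix_vector_mult_def sum.distrib algebra_simps)

locale la =
  fixes P :: "'i set" and v \<phi> :: "'i \<Rightarrow> complex^'m" and K :: "(complex^'m^'m) set"
  assumes norm: "\<And>i. i\<in>P \<Longrightarrow> dotv (\<phi> i) (v i) = 1"
  and Pne: "P \<noteq> {}"
  and irr: "\<And>U. csubspace U \<Longrightarrow> (\<And>i u. i\<in>P \<Longrightarrow> u\<in>U \<Longrightarrow> u - (2 * dotv (\<phi> i) u) *s v i \<in> U)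
               \<Longrightarrow> U = {0} \<or> U = UNIV"
  and K0: "0 \<in> K" and Kadd: "\<And>X Y. X\<in>K \<Longrightarrow> Y\<in>K \<Longrightarrow> X + Y \<in> K"
  and Ksc: "\<And>c X. X\<in>K \<Longrightarrow> cs c X \<in> K"
  and K1: "\<And>i X. i\<in>P \<Longrightarrow> X\<in>K \<Longrightarrow> br (outer (v i) (\<phi> i)) X \<in> K"
  and K2: "\<And>i j. i\<in>P \<Longrightarrow> j\<in>P \<Longrightarrow> br (outer (v i) (\<phi> i)) (outer (v j) (\<phi> j)) \<in> K"
  and Ksl: "K \<subseteq> sl"
begin

definition p where "p i = outer (v i) (\<phi> i)"
definition Kp where "Kp = {Y. \<forall>X\<in>K. trace (Y ** X) = 0}"

lemma Kp_cs: "Y \<in> Kp \<Longrightarrow> cs c Y \<in> Kp"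
  by (simp add: Kp_def cs_mult_left trace_cs)
lemma Kp_diff: "Y \<in> Kp \<Longrightarrow> Z \<in> Kp \<Longrightarrow> Y - Z \<in> Kp"
  by (simp add: Kp_def mm_diff_r trace_sub)
lemma Kp_add: "Y \<in> Kp \<Longrightarrow> Z \<in> Kp \<Longrightarrow> Y + Z \<in> Kp"
  by (simp add: Kp_def mm_add_r trace_add)
lemma Kp_half: "Y + Y \<in> Kp \<Longrightarrow> Y \<in> Kp"
proof -
  assume "Y + Y \<in> Kp"
  then have "cs (1/2) (Y + Y) \<in> Kp" by (rule Kp_cs)
  moreover have "cs (1/2) (Y + Y) = Y" by (simp add: vec_eq_iff)
  ultimately show ?thesis by simp
qed

lemma K_minus: "X \<in> K \<Longrightarrow> Z \<in> K \<Longrightarrow> X - Z \<in> K"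
proof -
  assume "X \<in> K" "Z \<in> K"
  then have "X + cs (-1) Z \<in> K" using Kadd Ksc by blast
  moreover have "X + cs (-1) Z = X - Z" by (simp add: vec_eq_iff)
  ultimately show ?thesis by simp
qed

lemma Kp_br: assumes "i\<in>P" "Y\<in>Kp" shows "br (p i) Y \<in> Kp"
  unfolding Kp_def
proof (simp only: mem_Collect_eq, intro ballI)
  fix X assume X: "X \<in> K"
  have "X ** p i - p i ** X \<in> K"
    using K_minus[OF K0 K1[OF assms(1) X]] by (simp add: br_def p_def)
  then have 0: "trace (Y ** (X ** p i - p i ** X)) = 0" using assms(2) by (simp add: Kp_def)
  have 1: "trace (br (p i) Y ** X) = trace (p i ** (Y ** X)) - trace (Y ** (p i ** X))"
    by (simp add: br_def mm_diff_r trace_sub matrix_mul_assoc)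
  have 2: "trace (p i ** (Y ** X)) = trace (Y ** (X ** p i))"
    by (metis trace_mul_sym matrix_mul_assoc)
  from 1 2 show "trace (br (p i) Y ** X) = 0" using 0 by (simp add: mm_diff_l trace_sub)
qed

lemma pp: "i\<in>P \<Longrightarrow> p i ** p i = p i"
  by (simp add: p_def outer_mult norm)
lemma ppR: "i\<in>P \<Longrightarrow> Z ** p i ** p i = Z ** p i"
  by (metis matrix_mul_assoc pp)

lemma proj1: assumes "i\<in>P" "Y\<in>Kp" shows "p i ** Y - p i ** Y ** p i \<in> Kp"
proof -
  have "br (p i) (br (p i) Y) + br (p i) Y = (p i ** Y - p i ** Y ** p i) + (p i ** Y - p i ** Y ** p i)"
    by (simp add: br_def mm_diff_l mm_diff_r matrix_mul_assoc pp[OF assms(1)] ppR[OF assms(1)])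
  moreover have "br (p i) (br (p i) Y) + br (p i) Y \<in> Kp"
    using assms by (intro Kp_add Kp_br)
  ultimately show ?thesis using Kp_half by metis
qed

lemma proj2: assumes "i\<in>P" "Y\<in>Kp" shows "Y ** p i - p i ** Y ** p i \<in> Kp"
proof -
  have "br (p i) (br (p i) Y) - br (p i) Y = (Y ** p i - p i ** Y ** p i) + (Y ** p i - p i ** Y ** p i)"
    by (simp add: br_def mm_diff_l mm_diff_r matrix_mul_assoc pp[OF assms(1)] ppR[OF assms(1)])
  moreover have "br (p i) (br (p i) Y) - br (p i) Y \<in> Kp"
    using assms by (intro Kp_diff Kp_br)
  ultimately show ?thesis using Kp_half by metis
qed


lemma mm_zero_l[simp]: "(0::complex^'m^'m) ** A = 0" by (simp add: vec_eq_iff mm_ent)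
lemma mm_zero_r[simp]: "(A::complex^'m^'m) ** 0 = 0" by (simp add: vec_eq_iff mm_ent)
lemma trace_neg: "trace (- (A::complex^'m^'m)) = - trace A" by (simp add: trace_def sum_negf)
lemma smult_one_v[simp]: "(1::complex) *s (x::complex^'m) = x" by (simp add: vec_eq_iff)

lemma psi_lemma: assumes i: "i\<in>P" and O: "outer (v i) \<psi> \<in> Kp" and z: "dotv \<psi> (v i) = 0"
  shows "\<psi> = 0"
proof -
  define J where "J = {j\<in>P. outer (v j) \<psi> \<in> Kp \<and> dotv \<psi> (v j) = 0}"
  have iJ: "i \<in> J" using assms by (simp add: J_def)
  have clos: "k \<in> J" if j: "j \<in> J" and k: "k \<in> P" and c: "dotv (\<phi> k) (v j) \<noteq> 0" for j k
  proof -
    from j have jP: "j\<in>P" and Oj: "outer (v j) \<psi> \<in> Kp" and zj: "dotv \<psi> (v j) = 0"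
      by (auto simp: J_def)
    have "br (p j) (p k) \<in> K" using K2[OF jP k] by (simp add: p_def)
    hence t0: "trace (outer (v j) \<psi> ** br (p j) (p k)) = 0" using Oj by (simp add: Kp_def)
    have "outer (v j) \<psi> ** br (p j) (p k) = outer (v j) \<psi> ** p j ** p k - outer (v j) \<psi> ** p k ** p j"
      by (simp add: br_def mm_diff_l matrix_mul_assoc)
    also have "\<dots> = - cs (dotv \<psi> (v k) * dotv (\<phi> k) (v j)) (outer (v j) (\<phi> j))"
      by (simp add: p_def outer_mult zj cs_mult_left)
    finally have "dotv \<psi> (v k) * dotv (\<phi> k) (v j) = 0"
      using t0 norm[OF jP] by (simp add: trace_neg trace_cs trace_outer)
    hence zk: "dotv \<psi> (v k) = 0" using c by simp
    have "br (p k) (outer (v j) \<psi>) = cs (dotv (\<phi> k) (v j)) (outer (v k) \<psi>)"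
      by (simp add: br_def p_def outer_mult zk)
    hence "cs (dotv (\<phi> k) (v j)) (outer (v k) \<psi>) \<in> Kp" using Kp_br[OF k Oj] by simp
    hence "cs (1 / dotv (\<phi> k) (v j)) (cs (dotv (\<phi> k) (v j)) (outer (v k) \<psi>)) \<in> Kp" by (rule Kp_cs)
    hence "outer (v k) \<psi> \<in> Kp" using c by simp
    thus ?thesis using k zk by (simp add: J_def)
  qed
  define U where "U = {u. \<forall>\<omega>. (\<forall>j\<in>J. dotv \<omega> (v j) = 0) \<longrightarrow> dotv \<omega> u = 0}"
  have sU: "csubspace U" unfolding csubspace_def U_def by (auto simp: dotv_add dotv_smult)
  have iU: "u - (2 * dotv (\<phi> k) u) *s v k \<in> U" if k: "k\<in>P" and u: "u \<in> U" for k u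
  proof -
    have "dotv \<omega> (u - (2 * dotv (\<phi> k) u) *s v k) = 0" if om: "\<forall>j\<in>J. dotv \<omega> (v j) = 0" for \<omega>
    proof (cases "k \<in> J")
      case True then show ?thesis using om u by (simp add: U_def dotv_diff dotv_smult)
    next
      case False
      then have "\<forall>j\<in>J. dotv (\<phi> k) (v j) = 0" using clos k by blast
      then have "dotv (\<phi> k) u = 0" using u by (simp add: U_def)
      then show ?thesis using om u by (simp add: U_def dotv_diff dotv_smult)
    qed
    then show ?thesis by (simp add: U_def)
  qed
  have "U = {0} \<or> U = UNIV" using irr[OF sU iU] by blast
  moreover have "v i \<in> U" using iJ by (auto simp: U_def)
  moreover have "v i \<noteq> 0" using norm[OF i] by auto
  ultimately have "U = UNIV" by auto
  then have "\<forall>u. dotv \<psi> u = 0" by (auto simp: U_def J_def)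
  then show ?thesis by (rule dotv_all_zero)
qed

lemma w_lemma: assumes i: "i\<in>P" and O: "outer w (\<phi> i) \<in> Kp" and z: "dotv (\<phi> i) w = 0"
  shows "w = 0"
proof -
  define J where "J = {j\<in>P. outer w (\<phi> j) \<in> Kp \<and> dotv (\<phi> j) w = 0}"
  have iJ: "i \<in> J" using assms by (simp add: J_def)
  have clos: "k \<in> J" if j: "j \<in> J" and k: "k \<in> P" and c: "dotv (\<phi> j) (v k) \<noteq> 0" for j k
  proof -
    from j have jP: "j\<in>P" and Oj: "outer w (\<phi> j) \<in> Kp" and zj: "dotv (\<phi> j) w = 0"
      by (auto simp: J_def)
    have "br (p j) (p k) \<in> K" using K2[OF jP k] by (simp add: p_def)
    hence t0: "trace (outer w (\<phi> j) ** br (p j) (p k)) = 0" using Oj by (simp add: Kp_def)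
    have "outer w (\<phi> j) ** br (p j) (p k) = outer w (\<phi> j) ** p j ** p k - outer w (\<phi> j) ** p k ** p j"
      by (simp add: br_def mm_diff_l matrix_mul_assoc)
    also have "\<dots> = cs (dotv (\<phi> j) (v k)) (outer w (\<phi> k))
        - cs (dotv (\<phi> j) (v k) * dotv (\<phi> k) (v j)) (outer w (\<phi> j))"
      by (simp add: p_def outer_mult norm[OF jP] cs_mult_left)
    finally have "dotv (\<phi> j) (v k) * dotv (\<phi> k) w = 0"
      using t0 zj by (simp add: trace_sub trace_cs trace_outer)
    hence zk: "dotv (\<phi> k) w = 0" using c by simp
    have "br (p k) (outer w (\<phi> j)) = cs (- dotv (\<phi> j) (v k)) (outer w (\<phi> k))"
      by (simp add: br_def p_def outer_mult zk vec_eq_iff)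
    hence "cs (- dotv (\<phi> j) (v k)) (outer w (\<phi> k)) \<in> Kp" using Kp_br[OF k Oj] by simp
    hence "cs (- 1 / dotv (\<phi> j) (v k)) (cs (- dotv (\<phi> j) (v k)) (outer w (\<phi> k))) \<in> Kp" by (rule Kp_cs)
    hence "outer w (\<phi> k) \<in> Kp" using c by simp
    thus ?thesis using k zk by (simp add: J_def)
  qed
  define N where "N = {u. \<forall>j\<in>J. dotv (\<phi> j) u = 0}"
  have sN: "csubspace N" unfolding csubspace_def N_def by (auto simp: dotv_add dotv_smult)
  have iN: "u - (2 * dotv (\<phi> k) u) *s v k \<in> N" if k: "k\<in>P" and u: "u \<in> N" for k u
  proof -
    have "dotv (\<phi> j) (u - (2 * dotv (\<phi> k) u) *s v k) = 0" if jJ: "j \<in> J" for j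
    proof (cases "k \<in> J")
      case True then show ?thesis using jJ u by (simp add: N_def dotv_diff dotv_smult)
    next
      case False
      then have "dotv (\<phi> j) (v k) = 0" using clos k jJ by blast
      then show ?thesis using jJ u by (simp add: N_def dotv_diff dotv_smult)
    qed
    then show ?thesis by (simp add: N_def)
  qed
  have "N = {0} \<or> N = UNIV" using irr[OF sN iN] by blast
  moreover have "v i \<notin> N" using iJ norm[OF i] by (auto simp: N_def intro!: bexI[of _ i])
  ultimately have "N = {0}" by auto
  moreover have "w \<in> N" by (auto simp: N_def J_def)
  ultimately show ?thesis by auto
qed

lemma comm: assumes i: "i\<in>P" and Y: "Y\<in>Kp" shows "p i ** Y = Y ** p i"
proof -
  define c where "c = dotv (\<phi> i v* Y) (v i)"
  have e1: "p i ** Y = outer (v i) (\<phi> i v* Y)" by (simp add: p_def outer_left)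
  have e2: "p i ** Y ** p i = outer (v i) (c *s \<phi> i)"
    by (subst e1) (simp add: p_def outer_mult c_def outer_smult2)
  have e3: "Y ** p i = outer (Y *v v i) (\<phi> i)" by (simp add: p_def outer_right)
  have e4: "p i ** Y ** p i = outer (c *s v i) (\<phi> i)" using e2 by (simp add: outer_smult1 outer_smult2)
  have A: "outer (v i) (\<phi> i v* Y - c *s \<phi> i) \<in> Kp" using proj1[OF i Y] unfolding e2 unfolding e1 by (simp add: outer_diff2)
  have "dotv (\<phi> i v* Y - c *s \<phi> i) (v i) = 0" by (simp add: dotv_diff1 dotv_smult1 c_def norm[OF i])
  hence A0: "\<phi> i v* Y - c *s \<phi> i = 0" by (rule psi_lemma[OF i A])
  have B: "outer (Y *v v i - c *s v i) (\<phi> i) \<in> Kp" using proj2[OF i Y] unfolding e4 unfolding e3 by (simp add: outer_diff1)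
  have "dotv (\<phi> i) (Y *v v i - c *s v i) = 0"
    by (simp add: dotv_diff dotv_smult c_def norm[OF i] dotv_vm)
  hence B0: "Y *v v i - c *s v i = 0" by (rule w_lemma[OF i B])
  have "p i ** Y - p i ** Y ** p i = 0" unfolding e2 unfolding e1 by (simp add: outer_diff2[symmetric] A0)
  moreover have "Y ** p i - p i ** Y ** p i = 0" unfolding e4 unfolding e3 by (simp add: outer_diff1[symmetric] B0)
  ultimately show ?thesis by simp
qed


lemma mat_mv: "mat c *v (x::complex^'m) = c *s x"
proof -
  have "(mat c *v x) $ i = c * x $ i" for i
  proof -
    have eq: "(\<lambda>j. mat c $ i $ j * x $ j) = (\<lambda>j. if j = i then c * x$i else 0)"
      by (auto simp: mat_def)
    show ?thesis unfolding matrix_vector_mult_def vec_lambda_beta eq by simp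
  qed
  then show ?thesis by (simp add: vec_eq_iff)
qed

lemma scalar: assumes "\<forall>i\<in>P. p i ** Y = Y ** p i" shows "\<exists>l. Y = mat l"
proof -
  obtain i0 where i0: "i0 \<in> P" using Pne by auto
  have comm_v: "Y *v (dotv (\<phi> k) u *s v k) = dotv (\<phi> k) (Y *v u) *s v k" if k: "k\<in>P" for k u
  proof -
    have "Y *v (p k *v u) = p k *v (Y *v u)" using assms k by (simp add: matrix_vector_mul_assoc)
    thus ?thesis by (simp add: p_def outer_mv)
  qed
  define l where "l = dotv (\<phi> i0) (Y *v v i0)"
  have ev: "Y *v v i0 = l *s v i0" using comm_v[OF i0, of "v i0"] by (simp add: norm[OF i0] l_def)
  define U where "U = {u. Y *v u = l *s u}"
  have sU: "csubspace U" unfolding csubspace_def U_def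
    by (auto simp: mv_add mv_smult vec_eq_iff algebra_simps)
  have iU: "u - (2 * dotv (\<phi> k) u) *s v k \<in> U" if k: "k\<in>P" and u: "u\<in>U" for k u
  proof -
    have u': "Y *v u = l *s u" using u by (simp add: U_def)
    have h: "(2 * dotv (\<phi> k) u) *s v k = 2 *s (dotv (\<phi> k) u *s v k)" by (simp add: vec_eq_iff)
    have "Y *v (u - (2 * dotv (\<phi> k) u) *s v k) = Y *v u - 2 *s (Y *v (dotv (\<phi> k) u *s v k))"
      by (simp only: h mv_diff mv_smult)
    also have "\<dots> = l *s u - 2 *s (dotv (\<phi> k) (l *s u) *s v k)"
      by (simp only: u' comm_v[OF k])
    also have "\<dots> = l *s (u - (2 * dotv (\<phi> k) u) *s v k)"
      by (simp add: dotv_smult vec_eq_iff algebra_simps)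
    finally show ?thesis by (simp add: U_def)
  qed
  have "U = {0} \<or> U = UNIV" using irr[OF sU iU] by blast
  moreover have "v i0 \<in> U" using ev by (simp add: U_def)
  moreover have "v i0 \<noteq> 0" using norm[OF i0] by auto
  ultimately have "U = UNIV" by auto
  then have "\<forall>x. Y *v x = mat l *v x" by (auto simp: U_def mat_mv)
  then show ?thesis using matrix_eq by blast
qed

lemma inner_cx: "inner (x::complex) y = Re (cnj x * y)"
  by (simp add: inner_complex_def)

lemma final: "sl \<subseteq> K"
proof
  fix X0 :: "complex^'m^'m" assume X0: "X0 \<in> sl"
  have sc: "r *\<^sub>R X = cs (complex_of_real r) X" for r X
    by (simp add: vec_eq_iff) (simp add: scaleR_conv_of_real)
  have sub: "subspace K" unfolding subspace_def using K0 Kadd Ksc by (simp add: sc)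
  obtain k z where k: "k \<in> span K" and z: "\<And>w. w \<in> span K \<Longrightarrow> orthogonal z w" and X: "X0 = k + z"
    by (rule orthogonal_subspace_decomp_exists[of K X0]) blast
  have kK: "k \<in> K" using k sub by (metis span_eq_iff)
  define Y where "Y = (\<chi> a b. cnj (z$b$a))"
  have "Y \<in> Kp" unfolding Kp_def
  proof (simp only: mem_Collect_eq, intro ballI)
    fix X assume XK: "X \<in> K"
    define S where "S = (\<Sum>a\<in>UNIV. \<Sum>b\<in>UNIV. cnj (z$a$b) * X$a$b)"
    have o1: "inner z X = 0" using z[of X] XK span_base[of X K] by (simp add: orthogonal_def)
    have o2: "inner z (cs \<i> X) = 0" using z[of "cs \<i> X"] Ksc[OF XK] span_base[of "cs \<i> X" K]
      by (simp add: orthogonal_def)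
    have "trace (Y ** X) = (\<Sum>a\<in>UNIV. \<Sum>b\<in>UNIV. cnj (z$b$a) * X$b$a)"
      by (simp add: trace_def mm_ent Y_def)
    also have "\<dots> = S" unfolding S_def by (rule sum.swap)
    finally have tS: "trace (Y ** X) = S" .
    have "inner z X = Re S" by (simp add: inner_vec_def inner_cx S_def Re_sum)
    moreover have "inner z (cs \<i> X) = - Im S"
      by (simp add: inner_vec_def inner_cx S_def Re_sum Im_sum) (simp add: sum_negf[symmetric])
    ultimately have "S = 0" using o1 o2 by (simp add: complex_eq_iff)
    then show "trace (Y ** X) = 0" using tS by simp
  qed
  then have "\<forall>i\<in>P. p i ** Y = Y ** p i" using comm by blast
  then obtain l where l: "Y = mat l" using scalar by blast
  have zY: "z$a$b = cnj (Y$b$a)" for a b by (simp add: Y_def)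
  have "trace z = of_nat CARD('m) * cnj l"
    by (simp add: trace_def zY l mat_def)
  moreover have "trace X0 = 0" using X0 by (simp add: sl_def)
  moreover have "trace k = 0" using kK Ksl by (auto simp: sl_def)
  ultimately have "cnj l = 0" using X by (simp add: trace_add)
  then have "z = 0" by (simp add: vec_eq_iff zY l mat_def)
  then show "X0 \<in> K" using X kK by simp
qed

end

lemma dotv_axis_c: "dotv a (axis k c) = a$k * c"
proof -
  have eq: "(\<lambda>i. a$i * axis k c $ i) = (\<lambda>i. if i = k then a$k * c else 0)" by (auto simp: axis_def)
  show ?thesis unfolding dotv_def by (subst eq) simp
qed

lemma refl_decomp:
  fixes A :: "complex^'m^'m"
  assumes "is_reflection A"
  shows "\<exists>v a. A = mat 1 - cs 2 (outer v a) \<and> dotv a v = 1"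
proof -
  from assms obtain H where AA: "A ** A = mat 1" and A1: "A \<noteq> mat 1" and hH: "chyperplane H"
    and fixH: "\<forall>x\<in>H. A *v x = x" by (auto simp: is_reflection_def)
  from hH obtain a where a0: "a \<noteq> (0::complex^'m)" and Hd: "H = {x. dotv a x = 0}"
    by (auto simp: chyperplane_def dotv_def)
  from a0 obtain k where ak: "a$k \<noteq> 0" by (metis vec_eq_iff zero_index)
  define e where "e = axis k (1 / a$k)"
  have ae: "dotv a e = 1" using ak by (simp add: e_def dotv_axis_c)
  define M where "M = mat 1 - A"
  define w where "w = M *v e"
  have Mx: "M *v x = dotv a x *s w" for x
  proof -
    have "x - dotv a x *s e \<in> H" by (simp add: Hd dotv_diff dotv_smult ae)
    then have "A *v (x - dotv a x *s e) = x - dotv a x *s e" using fixH by blast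
    then have "M *v (x - dotv a x *s e) = 0" by (simp add: M_def matrix_vector_mult_diff_rdistrib)
    then show ?thesis by (simp add: mv_diff mv_smult w_def)
  qed
  have Mo: "M = outer w a" using Mx by (simp add: matrix_eq outer_mv)
  have MM: "M ** M = cs 2 M"
    by (simp add: M_def mm_diff_l mm_diff_r AA) (simp add: vec_eq_iff algebra_simps)
  have "cs (dotv a w) M = cs 2 M" using MM by (simp add: Mo outer_mult)
  then have "cs (dotv a w - 2) (outer w a) = 0" by (simp add: Mo vec_eq_iff algebra_simps)
  moreover have "outer w a \<noteq> 0" using A1 Mo by (auto simp: M_def)
  ultimately have aw: "dotv a w = 2" using outer_cs_eq0 by fastforce
  have "A = mat 1 - cs 2 (outer ((1/2) *s w) a)"
    by (simp add: outer_smult1 Mo[symmetric] M_def)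
  moreover have "dotv a ((1/2) *s w) = 1" by (simp add: dotv_smult aw)
  ultimately show ?thesis by blast
qed

lemma cs_mv: "cs c A *v y = c *s (A *v y)"
  by (simp add: vec_eq_iff matrix_vector_mult_def sum_distrib_left algebra_simps)

lemma refl_mv: "(mat 1 - cs 2 (outer v a)) *v y = y - (2 * dotv a y) *s v"
  by (simp add: matrix_vector_mult_diff_rdistrib cs_mv outer_mv)

lemma br_refl_l: "br (cs e (mat 1 - cs 2 A)) X = cs (-2*e) (br A X)"
  by (simp add: br_def cs_mult_left cs_mult_right mm_diff_l mm_diff_r) (simp add: vec_eq_iff algebra_simps)
lemma br_refl_r: "br A (cs e (mat 1 - cs 2 B)) = cs (-2*e) (br A B)"
  by (simp add: br_def cs_mult_left cs_mult_right mm_diff_l mm_diff_r) (simp add: vec_eq_iff algebra_simps)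

lemma T_ent: "tensor_ext W R \<eta> f $ i $ j = (\<Sum>w\<in>W. f w * \<eta> w * R w $ i $ j)"
  by (simp add: tensor_ext_def)

lemma T_add: "tensor_ext W R \<eta> (\<lambda>w. x w + y w) = tensor_ext W R \<eta> x + tensor_ext W R \<eta> y"
  by (simp add: vec_eq_iff T_ent algebra_simps sum.distrib)
lemma T_diff: "tensor_ext W R \<eta> (\<lambda>w. x w - y w) = tensor_ext W R \<eta> x - tensor_ext W R \<eta> y"
  by (simp add: vec_eq_iff T_ent algebra_simps sum_subtractf)
lemma T_smult: "tensor_ext W R \<eta> (\<lambda>w. c * x w) = cs c (tensor_ext W R \<eta> x)"
  by (simp add: vec_eq_iff T_ent algebra_simps sum_distrib_left)
lemma T_zero: "tensor_ext W R \<eta> (\<lambda>w. 0) = 0"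
  by (simp add: vec_eq_iff T_ent)

lemma T_delta: assumes "s \<in> W" "finite W" shows "tensor_ext W R \<eta> (delta s) = cs (\<eta> s) (R s)"
proof -
  have "tensor_ext W R \<eta> (delta s) $ i $ j = \<eta> s * R s $ i $ j" for i j
  proof -
    have eq: "(\<lambda>w. delta s w * \<eta> w * R w $ i $ j) = (\<lambda>w. if w = s then \<eta> s * R s $ i $ j else 0)"
      by (auto simp: delta_def)
    show ?thesis unfolding T_ent by (subst eq) (simp add: assms)
  qed
  then show ?thesis by (simp add: vec_eq_iff)
qed

lemma T_mult:
  assumes fin: "finite W" and cl: "\<forall>u\<in>W. \<forall>v\<in>W. u ** v \<in> W"
    and Rm: "\<forall>u\<in>W. \<forall>v\<in>W. R (u ** v) = R u ** R v"
    and em: "\<forall>u\<in>W. \<forall>v\<in>W. \<eta> (u ** v) = \<eta> u * \<eta> v"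
  shows "tensor_ext W R \<eta> (gmult W f g) = tensor_ext W R \<eta> f ** tensor_ext W R \<eta> g"
proof -
  have "tensor_ext W R \<eta> (gmult W f g) $ i $ j = (tensor_ext W R \<eta> f ** tensor_ext W R \<eta> g) $ i $ j" for i j
  proof -
    have "tensor_ext W R \<eta> (gmult W f g) $ i $ j
        = (\<Sum>w\<in>W. \<Sum>u\<in>W. \<Sum>v\<in>W. if u ** v = w then f u * g v * \<eta> w * R w $ i $ j else 0)"
      unfolding T_ent by (rule sum.cong) (auto simp: gmult_def sum_distrib_right intro!: sum.cong)
    also have "\<dots> = (\<Sum>u\<in>W. \<Sum>w\<in>W. \<Sum>v\<in>W. if u ** v = w then f u * g v * \<eta> w * R w $ i $ j else 0)"
      by (rule sum.swap)
    also have "\<dots> = (\<Sum>u\<in>W. \<Sum>v\<in>W. \<Sum>w\<in>W. if u ** v = w then f u * g v * \<eta> w * R w $ i $ j else 0)"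
      by (rule sum.cong, simp, rule sum.swap)
    also have "\<dots> = (\<Sum>u\<in>W. \<Sum>v\<in>W. f u * g v * \<eta> (u ** v) * R (u ** v) $ i $ j)"
      using cl fin by (auto intro!: sum.cong)
    also have "\<dots> = (\<Sum>u\<in>W. \<Sum>v\<in>W. \<Sum>k\<in>UNIV. (f u * \<eta> u * R u $ i $ k) * (g v * \<eta> v * R v $ k $ j))"
      using Rm em by (auto intro!: sum.cong simp: mm_ent sum_distrib_left algebra_simps)
    also have "\<dots> = (\<Sum>u\<in>W. \<Sum>k\<in>UNIV. \<Sum>v\<in>W. (f u * \<eta> u * R u $ i $ k) * (g v * \<eta> v * R v $ k $ j))"
      by (rule sum.cong, simp, rule sum.swap)
    also have "\<dots> = (\<Sum>k\<in>UNIV. \<Sum>u\<in>W. \<Sum>v\<in>W. (f u * \<eta> u * R u $ i $ k) * (g v * \<eta> v * R v $ k $ j))"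
      by (rule sum.swap)
    also have "\<dots> = (tensor_ext W R \<eta> f ** tensor_ext W R \<eta> g) $ i $ j"
      by (simp add: mm_ent T_ent sum_product)
    finally show ?thesis .
  qed
  then show ?thesis by (simp add: vec_eq_iff)
qed

lemma lie_H'_sub: "x \<in> lie_H' W \<Longrightarrow> x \<in> lie_H W"
  by (induction rule: lie_H'.induct) (auto intro: lie_H.intros)

lemma trace_br: "trace (br A (B::complex^'m^'m)) = 0"
  by (simp add: br_def trace_sub trace_mul_sym[of A B])


theorem proposition2p9:
  fixes W :: "('n::finite) cmat set"
    and R :: "'n cmat \<Rightarrow> ('m::finite) cmat"
    and \<eta> :: "'n cmat \<Rightarrow> complex"
  assumes "irreducible_reflection_group W"
    and "reflection_representation W R"
    and "sign_char W \<eta>"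
  shows "tensor_ext W R \<eta> ` lie_H' W = sl"
proof -
  from assms(1) have finW: "finite W" and mg: "matrix_group W" and gen: "W = gen_by (reflections W)"
    by (auto simp: irreducible_reflection_group_def)
  from mg have one: "mat 1 \<in> W" and cl: "\<forall>u\<in>W. \<forall>v\<in>W. u ** v \<in> W" by (auto simp: matrix_group_def)
  from assms(2) have inv: "\<forall>w\<in>W. invertible (R w)" and Rm: "\<forall>u\<in>W. \<forall>v\<in>W. R (u ** v) = R u ** R v"
    and irrR: "irreducible_on (R ` W)" and card: "CARD('m) \<ge> 2"
    and rr: "\<forall>s\<in>reflections W. R s = mat 1 \<or> is_reflection (R s)"
    by (auto simp: reflection_representation_def representation_def)
  from assms(3) have epm: "\<forall>w\<in>W. \<eta> w = 1 \<or> \<eta> w = -1"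
    and em: "\<forall>u\<in>W. \<forall>v\<in>W. \<eta> (u ** v) = \<eta> u * \<eta> v"
    by (auto simp: sign_char_def)
  have reflW: "reflections W \<subseteq> W" by (auto simp: reflections_def)
  have enz: "\<eta> s \<noteq> 0" if "s \<in> W" for s using epm that by force
  define T where "T = tensor_ext W R \<eta>"
  define K where "K = T ` lie_H' W"
  have Tbr: "T (gbracket W f g) = br (T f) (T g)" for f g
    unfolding T_def gbracket_def by (simp add: T_diff T_mult[OF finW cl Rm em] br_def)
  have R1: "R (mat 1) = mat 1"
  proof -
    obtain B where B: "R (mat 1) ** B = mat 1" using inv one by (auto simp: invertible_def)
    have "R (mat 1) = R (mat 1) ** R (mat 1)" using Rm one by (metis matrix_mul_lid)
    then have "R (mat 1) ** B = R (mat 1) ** (R (mat 1) ** B)" by (metis matrix_mul_assoc)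
    then show ?thesis using B by simp
  qed
  define P where "P = {s \<in> reflections W. R s \<noteq> mat 1}"
  have "\<forall>s\<in>P. \<exists>x. R s = mat 1 - cs 2 (outer (fst x) (snd x)) \<and> dotv (snd x) (fst x) = 1"
  proof
    fix s assume "s \<in> P"
    then have "is_reflection (R s)" using rr by (auto simp: P_def)
    from refl_decomp[OF this] obtain v a where "R s = mat 1 - cs 2 (outer v a) \<and> dotv a v = 1" by blast
    then show "\<exists>x. R s = mat 1 - cs 2 (outer (fst x) (snd x)) \<and> dotv (snd x) (fst x) = 1"
      by (intro exI[of _ "(v,a)"]) simp
  qed
  from bchoice[OF this] obtain f where f: "\<forall>s\<in>P. R s = mat 1 - cs 2 (outer (fst (f s)) (snd (f s)))
       \<and> dotv (snd (f s)) (fst (f s)) = 1" by blast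
  define vv where "vv s = fst (f s)" for s
  define ph where "ph s = snd (f s)" for s
  have Rs: "R s = mat 1 - cs 2 (outer (vv s) (ph s))" if "s \<in> P" for s
    using f that by (simp add: vv_def ph_def)
  have nrm: "dotv (ph s) (vv s) = 1" if "s \<in> P" for s
    using f that by (simp add: vv_def ph_def)
  have act: "R s *v y = (if s \<in> P then y - (2 * dotv (ph s) y) *s vv s else y)"
    if "s \<in> reflections W" for s y
  proof (cases "s \<in> P")
    case True then show ?thesis by (simp add: Rs refl_mv)
  next
    case False then have "R s = mat 1" using that by (simp add: P_def)
    then show ?thesis using False by simp
  qed
  have irr: "U = {0} \<or> U = UNIV" if sU: "csubspace U"
    and hU: "\<And>i u. i\<in>P \<Longrightarrow> u\<in>U \<Longrightarrow> u - (2 * dotv (ph i) u) *s vv i \<in> U" for U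
  proof -
    have gi: "\<forall>u\<in>U. R w *v u \<in> U" if "w \<in> gen_by (reflections W)" for w
      using that
    proof (induction rule: gen_by.induct)
      case gen_one show ?case using R1 by simp
    next
      case (gen_mult s x)
      have xW: "x \<in> W" using gen_mult.hyps(2) gen by simp
      have sW: "s \<in> W" using gen_mult.hyps(1) reflW by auto
      show ?case
      proof
        fix u assume u: "u \<in> U"
        have y: "R x *v u \<in> U" using gen_mult.IH u by blast
        have "R (s ** x) *v u = R s *v (R x *v u)" using Rm sW xW by (simp add: matrix_vector_mul_assoc)
        also have "\<dots> \<in> U" using act[OF gen_mult.hyps(1)] hU y by auto
        finally show "R (s ** x) *v u \<in> U" .
      qed
    qed
    have "\<forall>g\<in>R ` W. \<forall>u\<in>U. g *v u \<in> U"
    proof (intro ballI)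
      fix g u assume "g \<in> R ` W" "u \<in> U"
      then obtain w where "w \<in> W" "g = R w" by blast
      then show "g *v u \<in> U" using gi gen \<open>u \<in> U\<close> by auto
    qed
    then show ?thesis using irrR sU unfolding irreducible_on_def by blast
  qed
  have Pne: "P \<noteq> {}"
  proof
    assume P0: "P = {}"
    have "\<exists>a b::'m. a \<noteq> b"
    proof (rule ccontr)
      assume "\<not> (\<exists>a b::'m. a \<noteq> b)"
      then have "\<forall>x::'m. x = undefined" by blast
      then have u: "(UNIV::'m set) = {undefined}" by blast
      have "CARD('m) = card {undefined::'m}" by (simp only: u)
      then have "CARD('m) = 1" by simp
      then show False using card by simp
    qed
    then obtain a b :: 'm where ab: "a \<noteq> b" by blast
    define U where "U = {x::complex^'m. \<forall>i. i \<noteq> a \<longrightarrow> x$i = 0}"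
    have "csubspace U" by (auto simp: csubspace_def U_def)
    then have "U = {0} \<or> U = UNIV" using irr P0 by blast
    moreover have "axis a 1 \<in> U" by (auto simp: U_def axis_def)
    moreover have "axis a (1::complex) \<noteq> 0" by (simp add: axis_eq_0_iff)
    moreover have "axis b (1::complex) \<notin> U" using ab by (auto simp: U_def axis_def)
    ultimately show False by auto
  qed
  have K0: "0 \<in> K" unfolding K_def T_def by (metis T_zero image_eqI lie_H'.H'_zero)
  have Kadd: "X + Y \<in> K" if XY: "X \<in> K" "Y \<in> K" for X Y
  proof -
    obtain x y where xy: "x \<in> lie_H' W" "y \<in> lie_H' W" and e: "X = T x" "Y = T y"
      using XY unfolding K_def by blast
    have "X + Y = T (\<lambda>w. x w + y w)" by (simp add: T_def T_add e)
    moreover have "(\<lambda>w. x w + y w) \<in> lie_H' W" by (rule lie_H'.H'_add[OF xy])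
    ultimately show ?thesis unfolding K_def by (rule image_eqI)
  qed
  have Ksc: "cs c X \<in> K" if XK: "X \<in> K" for c X
  proof -
    obtain x where x: "x \<in> lie_H' W" and e: "X = T x" using XK unfolding K_def by blast
    have "cs c X = T (\<lambda>w. c * x w)" by (simp add: T_def T_smult e)
    moreover have "(\<lambda>w. c * x w) \<in> lie_H' W" by (rule lie_H'.H'_smult[OF x])
    ultimately show ?thesis unfolding K_def by (rule image_eqI)
  qed
  have trK: "trace (T x) = 0" if "x \<in> lie_H' W" for x
    using that
  proof (induction rule: lie_H'.induct)
    case (H'_bracket x y) then show ?case by (simp add: Tbr trace_br)
  next
    case H'_zero then show ?case by (simp add: T_def T_zero trace_def)
  next
    case (H'_add x y) then show ?case by (simp add: T_def T_add trace_add)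
  next
    case (H'_smult x c) then show ?case by (simp add: T_def T_smult trace_cs)
  qed
  have Ksl: "K \<subseteq> sl" using trK unfolding K_def sl_def by blast
  have Tdp: "T (delta s) = cs (\<eta> s) (mat 1 - cs 2 (outer (vv s) (ph s)))" if "s \<in> P" for s
  proof -
    have sW: "s \<in> W" using that reflW unfolding P_def by blast
    show ?thesis by (simp add: T_def T_delta[OF sW finW] Rs[OF that])
  qed
  have K1: "br (outer (vv i) (ph i)) X \<in> K" if i: "i \<in> P" and X: "X \<in> K" for i X
  proof -
    obtain x where x: "x \<in> lie_H' W" and Xx: "X = T x" using X by (auto simp: K_def)
    have iW: "i \<in> W" and iR: "i \<in> reflections W" using i reflW by (auto simp: P_def)
    have "gbracket W (delta i) x \<in> lie_H' W"
      by (rule lie_H'.H'_bracket[OF lie_H.H_gen[OF iR] lie_H'_sub[OF x]])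
    then have "T (gbracket W (delta i) x) \<in> K" by (simp add: K_def)
    moreover have "T (gbracket W (delta i) x) = cs (-2 * \<eta> i) (br (outer (vv i) (ph i)) X)"
      by (simp add: Tbr Tdp[OF i] br_refl_l Xx)
    ultimately have "cs (-2 * \<eta> i) (br (outer (vv i) (ph i)) X) \<in> K" by metis
    then have "cs (- 1 / (2 * \<eta> i)) (cs (-2 * \<eta> i) (br (outer (vv i) (ph i)) X)) \<in> K"
      by (rule Ksc)
    then show ?thesis using enz[OF iW] by simp
  qed
  have K2: "br (outer (vv i) (ph i)) (outer (vv j) (ph j)) \<in> K" if i: "i \<in> P" and j: "j \<in> P" for i j
  proof -
    have iW: "i \<in> W" and iR: "i \<in> reflections W" using i reflW by (auto simp: P_def)
    have jW: "j \<in> W" and jR: "j \<in> reflections W" using j reflW by (auto simp: P_def)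
    have "gbracket W (delta i) (delta j) \<in> lie_H' W"
      by (rule lie_H'.H'_bracket[OF lie_H.H_gen[OF iR] lie_H.H_gen[OF jR]])
    then have "T (gbracket W (delta i) (delta j)) \<in> K" by (simp add: K_def)
    moreover have "T (gbracket W (delta i) (delta j))
        = cs (-2 * \<eta> i * (-2 * \<eta> j)) (br (outer (vv i) (ph i)) (outer (vv j) (ph j)))"
      by (simp add: Tbr Tdp[OF i] Tdp[OF j] br_refl_l br_refl_r mult.commute)
    ultimately have "cs (-2 * \<eta> i * (-2 * \<eta> j))
        (br (outer (vv i) (ph i)) (outer (vv j) (ph j))) \<in> K" by metis
    then have "cs (1 / (4 * \<eta> i * \<eta> j)) (cs (-2 * \<eta> i * (-2 * \<eta> j))
        (br (outer (vv i) (ph i)) (outer (vv j) (ph j)))) \<in> K"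
      by (rule Ksc)
    then show ?thesis using enz[OF iW] enz[OF jW] by simp
  qed
  interpret L: la P vv ph K
    by (rule la.intro[OF nrm Pne irr K0 Kadd Ksc K1 K2 Ksl])
  have "sl \<subseteq> K" by (rule L.final)
  then show ?thesis using Ksl unfolding K_def T_def by blast
qed

end
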